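(* Let $\Phi\in\mathcal{G}_0$ and suppose that $\Phi$ extends holomorphically to a mapping $\mathbb{C}_0\to\mathbb{C}_{\frac12+\epsilon}$ for some $\epsilon>0$. Then $D_\Phi f=f'\circ\Phi$ defines a bounded operator on $\mathcal{H}^2$.
   Context: $\mathbb{C}_\theta=\{s:\Re s>\theta\}$. $\mathcal{H}^2$ is the Hilbert space of Dirichlet series $f(s)=\sum_{n\ge1}a_nn^{-s}$ with $\|f\|_{\mathcal{H}^2}^2=\sum_n|a_n|^2<\infty$. $\mathcal{G}_0$ is the class of maps $\Phi(s)=\sum_{n\ge1}c_nn^{-s}$ where the series converges uniformly in $\mathbb{C}_\eta$ for every $\eta>0$ and $\Phi(\mathbb{C}_0)\subset\mathbb{C}_{1/2}$. *)

theory Defs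
  imports "HOL-Analysis.Analysis"
begin

text \<open>Dirichlet series with coefficient sequence a (indexed from n = 1; a 0 is ignored):
  f(s) = sum_{n>=1} a_n n^{-s}.\<close>
definition dseries :: "(nat \<Rightarrow> complex) \<Rightarrow> complex \<Rightarrow> complex" where
  "dseries a s = (\<Sum>n. a (Suc n) * of_nat (Suc n) powr (- s))"

definition dpartial :: "(nat \<Rightarrow> complex) \<Rightarrow> nat \<Rightarrow> complex \<Rightarrow> complex" where
  "dpartial a N s = (\<Sum>n<N. a (Suc n) * of_nat (Suc n) powr (- s))"

definition halfplane :: "real \<Rightarrow> complex set" where
  "halfplane \<theta> = {s. Re s > \<theta>}"

text \<open>The Hardy space H^2 of Dirichlet series, via coefficient sequences.\<close>
definition H2 :: "(nat \<Rightarrow> complex) set" where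
  "H2 = {a. summable (\<lambda>n. (cmod (a (Suc n)))\<^sup>2)}"

definition H2_norm :: "(nat \<Rightarrow> complex) \<Rightarrow> real" where
  "H2_norm a = sqrt (\<Sum>n. (cmod (a (Suc n)))\<^sup>2)"

text \<open>The class G_0 (coefficient sequence c of Phi).\<close>
definition G0 :: "(nat \<Rightarrow> complex) \<Rightarrow> bool" where
  "G0 c \<longleftrightarrow>
     (\<forall>\<eta>>0. uniform_limit (halfplane \<eta>) (dpartial c) (dseries c) sequentially) \<and>
     dseries c ` halfplane 0 \<subseteq> halfplane (1/2)"

end

theory Submission
  imports Defs
begin



lemma avg_geom_tendsto:
  fixes z :: complex
  assumes "z \<noteq> 1" "cmod z = 1"
  shows "(\<lambda>J. (1 / of_nat J) * (\<Sum>j<J. z ^ j)) \<longlonglongrightarrow> 0"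
proof (rule Lim_null_comparison)
  have nz: "1 - z \<noteq> 0" using assms by simp
  show "\<forall>\<^sub>F J in sequentially. norm ((1 / of_nat J) * (\<Sum>j<J. z ^ j)) \<le> (2 / cmod (1 - z)) * (1 / real J)"
  proof (intro always_eventually allI)
    fix J :: nat
    have "norm (\<Sum>j<J. z ^ j) = cmod (1 - z^J) / cmod (1 - z)"
      using assms(1) by (simp add: sum_gp_strict norm_divide)
    also have "cmod (1 - z^J) \<le> 2"
      using norm_triangle_ineq4[of 1 "z^J"] assms(2) by (simp add: norm_power)
    hence "cmod (1 - z^J) / cmod (1 - z) \<le> 2 / cmod (1 - z)"
      by (intro divide_right_mono) auto
    finally have "norm (\<Sum>j<J. z ^ j) \<le> 2 / cmod (1 - z)" .
    hence "(1 / real J) * norm (\<Sum>j<J. z ^ j) \<le> (1 / real J) * (2 / cmod (1 - z))"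
      by (intro mult_left_mono) auto
    thus "norm ((1 / of_nat J) * (\<Sum>j<J. z ^ j)) \<le> (2 / cmod (1 - z)) * (1 / real J)"
      by (simp add: norm_mult norm_divide mult.commute)
  qed
  show "(\<lambda>J. 2 / cmod (1 - z) * (1 / real J)) \<longlonglongrightarrow> 0"
    by (intro tendsto_mult_right_zero lim_const_over_n)
qed

lemma avg_geom_one: "(\<lambda>J. (1 / of_nat J) * (\<Sum>j<J. (1::complex) ^ j)) \<longlonglongrightarrow> 1"
proof -
  have "\<forall>\<^sub>F J in sequentially. (1 / of_nat J) * (\<Sum>j<J. (1::complex) ^ j) = 1"
    using eventually_gt_at_top[of "0::nat"] by eventually_elim simp
  thus ?thesis by (rule tendsto_eventually)
qed

lemma parseval_finite:
  fixes e :: "'i \<Rightarrow> complex" and f :: "'i \<Rightarrow> real"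
  assumes M: "finite M" and inj: "inj_on f M"
    and bnd: "\<And>t. cmod (\<Sum>m\<in>M. e m * exp (\<i> * of_real (t * f m))) \<le> B"
  shows "(\<Sum>m\<in>M. (cmod (e m))\<^sup>2) \<le> B\<^sup>2"
proof -
  define P where "P t = (\<Sum>m\<in>M. e m * exp (\<i> * of_real (t * f m)))" for t
  define L where "L = (\<Sum>m\<in>M. \<Sum>k\<in>M. \<bar>f m - f k\<bar>)"
  have L0: "L \<ge> 0" unfolding L_def by (intro sum_nonneg) auto
  define \<tau> where "\<tau> = 1 / (L + 1)"
  have tau0: "\<tau> > 0" using L0 by (simp add: \<tau>_def)
  define z where "z m k = exp (\<i> * of_real (\<tau> * (f m - f k)))" for m k
  define A where "A J m k = (1 / of_nat J) * (\<Sum>j<J. z m k ^ j)" for J m k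
  have B0: "B \<ge> 0" using bnd[of 0] norm_ge_zero order_trans by blast
  have sq: "of_real ((cmod (P t))\<^sup>2) = (\<Sum>m\<in>M. \<Sum>k\<in>M. e m * cnj (e k) * exp (\<i> * of_real (t * (f m - f k))))" for t
  proof -
    have "of_real ((cmod (P t))\<^sup>2) = P t * cnj (P t)" by (rule complex_norm_square)
    also have "\<dots> = (\<Sum>m\<in>M. \<Sum>k\<in>M. (e m * exp (\<i> * of_real (t * f m))) * cnj (e k * exp (\<i> * of_real (t * f k))))"
      unfolding P_def cnj_sum sum_distrib_right sum_distrib_left by (subst sum.swap) simp
    also have "\<dots> = (\<Sum>m\<in>M. \<Sum>k\<in>M. e m * cnj (e k) * exp (\<i> * of_real (t * (f m - f k))))"
    proof (intro sum.cong refl)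
      fix m k
      have "cnj (exp (\<i> * of_real (t * f k))) = exp (- (\<i> * of_real (t * f k)))"
        by (simp add: exp_cnj)
      moreover have "exp (\<i> * of_real (t * f m)) * exp (- (\<i> * of_real (t * f k))) = exp (\<i> * of_real (t * (f m - f k)))"
        by (simp add: exp_add[symmetric] algebra_simps)
      ultimately show "(e m * exp (\<i> * of_real (t * f m))) * cnj (e k * exp (\<i> * of_real (t * f k))) = e m * cnj (e k) * exp (\<i> * of_real (t * (f m - f k)))"
        by (simp add: mult_ac)
    qed
    finally show ?thesis .
  qed
  have avg: "(\<Sum>m\<in>M. \<Sum>k\<in>M. e m * cnj (e k) * A J m k) = of_real ((1 / real J) * (\<Sum>j<J. (cmod (P (real j * \<tau>)))\<^sup>2))" for J
  proof -
    have zp: "z m k ^ j = exp (\<i> * of_real (real j * \<tau> * (f m - f k)))" for m k j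
      unfolding z_def by (simp add: exp_of_nat_mult[symmetric] algebra_simps)
    have "of_real ((1 / real J) * (\<Sum>j<J. (cmod (P (real j * \<tau>)))\<^sup>2)) = (1 / of_nat J) * (\<Sum>j<J. of_real ((cmod (P (real j * \<tau>)))\<^sup>2) :: complex)"
      by simp
    also have "\<dots> = (1 / of_nat J) * (\<Sum>j<J. \<Sum>m\<in>M. \<Sum>k\<in>M. e m * cnj (e k) * z m k ^ j)"
      unfolding sq zp by simp
    also have "\<dots> = (\<Sum>m\<in>M. \<Sum>k\<in>M. e m * cnj (e k) * A J m k)"
      unfolding A_def sum_distrib_left
      by (subst sum.swap, rule sum.cong[OF refl], subst sum.swap) (simp add: sum_distrib_left mult_ac)
    finally show ?thesis by simp
  qed
  have lim: "(\<lambda>J. \<Sum>m\<in>M. \<Sum>k\<in>M. e m * cnj (e k) * A J m k) \<longlonglongrightarrow> (\<Sum>m\<in>M. \<Sum>k\<in>M. e m * cnj (e k) * (if m = k then 1 else 0))"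
  proof (intro tendsto_intros)
    fix m k assume mk: "m \<in> M" "k \<in> M"
    show "(\<lambda>J. A J m k) \<longlonglongrightarrow> (if m = k then 1 else 0)"
    proof (cases "m = k")
      case True
      thus ?thesis using avg_geom_one by (simp add: A_def z_def)
    next
      case False
      have fne: "f m \<noteq> f k" using inj mk False by (auto dest: inj_onD)
      have le: "\<bar>f m - f k\<bar> \<le> L"
      proof -
        have "\<bar>f m - f k\<bar> \<le> (\<Sum>k\<in>M. \<bar>f m - f k\<bar>)"
          using M mk by (intro member_le_sum) auto
        also have "\<dots> \<le> L" unfolding L_def using M mk by (intro member_le_sum sum_nonneg) auto
        finally show ?thesis .
      qed
      have small: "\<bar>\<tau> * (f m - f k)\<bar> < 1"
      proof -
        have "\<bar>\<tau> * (f m - f k)\<bar> = \<bar>f m - f k\<bar> / (L + 1)" using L0 by (simp add: \<tau>_def abs_mult)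
        also have "\<dots> < 1" using le L0 by simp
        finally show ?thesis .
      qed
      have pos: "\<tau> * (f m - f k) \<noteq> 0" using tau0 fne by simp
      have "z m k \<noteq> 1"
      proof
        assume "z m k = 1"
        then obtain n :: int where n: "\<tau> * (f m - f k) = of_int (2 * n) * pi"
          unfolding z_def exp_eq_1 by auto
        have "n \<noteq> 0" using n pos by auto
        hence "\<bar>of_int (2 * n) * pi\<bar> \<ge> 2 * pi" by (simp add: abs_mult)
        moreover have "pi > 1" using pi_gt3 by simp
        ultimately show False using small n by simp
      qed
      moreover have "cmod (z m k) = 1" unfolding z_def by simp
      ultimately show ?thesis using avg_geom_tendsto False by (simp add: A_def)
    qed
  qed
  have "(\<Sum>m\<in>M. \<Sum>k\<in>M. e m * cnj (e k) * (if m = k then 1 else 0)) = of_real (\<Sum>m\<in>M. (cmod (e m))\<^sup>2)"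
    using M by (simp add: if_distrib cong: if_cong) (simp add: complex_norm_square[symmetric])
  with lim have lim2: "(\<lambda>J. of_real ((1 / real J) * (\<Sum>j<J. (cmod (P (real j * \<tau>)))\<^sup>2)) :: complex) \<longlonglongrightarrow> of_real (\<Sum>m\<in>M. (cmod (e m))\<^sup>2)"
    unfolding avg by simp
  hence lim3: "(\<lambda>J. (1 / real J) * (\<Sum>j<J. (cmod (P (real j * \<tau>)))\<^sup>2)) \<longlonglongrightarrow> (\<Sum>m\<in>M. (cmod (e m))\<^sup>2)"
    using tendsto_Re by fastforce
  show ?thesis
  proof (rule tendsto_le[OF _ tendsto_const lim3])
    show "\<forall>\<^sub>F J in sequentially. (1 / real J) * (\<Sum>j<J. (cmod (P (real j * \<tau>)))\<^sup>2) \<le> B\<^sup>2"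
      using eventually_gt_at_top[of "0::nat"]
    proof eventually_elim
      case (elim J)
      have "(\<Sum>j<J. (cmod (P (real j * \<tau>)))\<^sup>2) \<le> (\<Sum>j<J. B\<^sup>2)"
        by (intro sum_mono power_mono) (auto simp only: P_def bnd norm_ge_zero)
      hence "(\<Sum>j<J. (cmod (P (real j * \<tau>)))\<^sup>2) \<le> real J * B\<^sup>2" by simp
      thus ?case using elim by (simp add: field_simps)
    qed
  qed simp
qed




definition pw :: "nat \<Rightarrow> complex \<Rightarrow> complex" where
  "pw m s = exp (- s * of_real (ln (real m)))"

lemma pw_powr: "m > 0 \<Longrightarrow> of_nat m powr (- s) = pw m s"
  by (simp add: powr_def pw_def mult_ac)

lemma norm_pw: "cmod (pw m s) = exp (- Re s * ln (real m))"
  by (simp add: pw_def)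

lemma pw_1 [simp]: "pw 1 s = 1" "pw (Suc 0) s = 1"
  by (simp_all add: pw_def)

lemma pw_mult: "m > 0 \<Longrightarrow> n > 0 \<Longrightarrow> pw (m * n) s = pw m s * pw n s"
  by (simp add: pw_def ln_mult exp_add[symmetric] algebra_simps)

lemma pw_prod:
  assumes "finite I" "\<And>i. i \<in> I \<Longrightarrow> g i > 0"
  shows "pw (prod g I) s = (\<Prod>i\<in>I. pw (g i) s)"
  using assms
proof (induction I rule: finite_induct)
  case (insert x F)
  have "prod g F > 0" using insert by (intro prod_pos) auto
  thus ?case using insert by (simp add: pw_mult)
qed simp

lemma pw_line: "pw m (of_real \<eta> + \<i> * of_real t) = of_real (exp (- \<eta> * ln (real m))) * exp (\<i> * of_real (t * (- ln (real m))))"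
  by (simp add: pw_def exp_add[symmetric] exp_of_real[symmetric] algebra_simps)

lemma dseries_pw: "dseries a s = (\<Sum>n. a (Suc n) * pw (Suc n) s)"
  unfolding dseries_def by (simp add: pw_powr del: of_nat_Suc)

lemma sum_1K: "(\<Sum>m\<in>{1..K}. f m) = (\<Sum>n<K. f (Suc n))"
  by (induction K) (auto simp: atLeastAtMostSuc_conv add.commute)

lemma dpartial_pw: "dpartial a N s = (\<Sum>m\<in>{1..N}. a m * pw m s)"
  unfolding dpartial_def sum_1K by (simp add: pw_powr del: of_nat_Suc)

lemma exp2: "(exp (x::real))\<^sup>2 = exp (2 * x)"
  by (simp add: power2_eq_square exp_add[symmetric])

lemma cs_series:
  fixes x y :: "nat \<Rightarrow> real"
  assumes "summable (\<lambda>n. (x n)\<^sup>2)" "summable (\<lambda>n. (y n)\<^sup>2)"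
  shows "summable (\<lambda>n. \<bar>x n * y n\<bar>)"
    and "(\<Sum>n. \<bar>x n * y n\<bar>) \<le> sqrt (\<Sum>n. (x n)\<^sup>2) * sqrt (\<Sum>n. (y n)\<^sup>2)"
proof -
  have le: "\<bar>x n * y n\<bar> \<le> ((x n)\<^sup>2 + (y n)\<^sup>2) / 2" for n
  proof -
    have "0 \<le> (\<bar>x n\<bar> - \<bar>y n\<bar>)\<^sup>2" by simp
    thus ?thesis by (simp add: power2_eq_square abs_mult algebra_simps)
  qed
  show sm: "summable (\<lambda>n. \<bar>x n * y n\<bar>)"
    by (rule summable_comparison_test[OF _ summable_divide[OF summable_add[OF assms], where c=2]]) (use le in \<open>auto intro!: exI[of _ 0]\<close>)
  show "(\<Sum>n. \<bar>x n * y n\<bar>) \<le> sqrt (\<Sum>n. (x n)\<^sup>2) * sqrt (\<Sum>n. (y n)\<^sup>2)"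
  proof (rule suminf_le_const[OF sm])
    fix K
    have "(\<Sum>n<K. \<bar>x n\<bar> * \<bar>y n\<bar>)\<^sup>2 \<le> (\<Sum>n<K. \<bar>x n\<bar>\<^sup>2) * (\<Sum>n<K. \<bar>y n\<bar>\<^sup>2)"
      by (rule Cauchy_Schwarz_ineq_sum)
    hence "(\<Sum>n<K. \<bar>x n * y n\<bar>) \<le> sqrt ((\<Sum>n<K. (x n)\<^sup>2) * (\<Sum>n<K. (y n)\<^sup>2))"
      by (simp add: abs_mult real_le_rsqrt)
    also have "\<dots> \<le> sqrt ((\<Sum>n. (x n)\<^sup>2) * (\<Sum>n. (y n)\<^sup>2))"
      by (intro real_sqrt_le_mono mult_mono sum_le_suminf assms sum_nonneg suminf_nonneg) auto
    finally show "(\<Sum>n<K. \<bar>x n * y n\<bar>) \<le> sqrt (\<Sum>n. (x n)\<^sup>2) * sqrt (\<Sum>n. (y n)\<^sup>2)"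
      by (simp add: real_sqrt_mult)
  qed
qed

lemma summable_exp_ln:
  assumes "p > 1"
  shows "summable (\<lambda>n. exp (- p * ln (real (Suc n))))"
proof -
  have "summable (\<lambda>n. real n powr (- p))" using assms by (simp add: summable_real_powr_iff)
  hence "summable (\<lambda>n. real (Suc n) powr (- p))" by (subst summable_Suc_iff)
  thus ?thesis by (simp add: powr_def mult_ac del: of_nat_Suc)
qed

lemma summable_ln2_exp_ln:
  assumes "p > 1"
  shows "summable (\<lambda>n. (ln (real (Suc n)))\<^sup>2 * exp (- p * ln (real (Suc n))))"
proof -
  define d where "d = (p - 1) / 4"
  have d0: "d > 0" using assms by (simp add: d_def)
  have pd: "p - 2 * d > 1" using assms unfolding d_def by (simp add: field_simps)
  have gs: "summable (\<lambda>n. (1 / d\<^sup>2) * exp (- (p - 2 * d) * ln (real (Suc n))))"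
    using pd by (intro summable_mult summable_exp_ln) simp
  have bnd: "norm ((ln (real (Suc n)))\<^sup>2 * exp (- p * ln (real (Suc n)))) \<le> (1 / d\<^sup>2) * exp (- (p - 2 * d) * ln (real (Suc n)))" for n
  proof -
    define L where "L = ln (real (Suc n))"
    have L0: "L \<ge> 0" by (simp add: L_def)
    have "L \<le> real (Suc n) powr d / d" unfolding L_def by (rule ln_powr_bound) (use d0 in auto)
    also have "real (Suc n) powr d = exp (d * L)" by (simp add: powr_def L_def mult_ac del: of_nat_Suc)
    finally have "L \<le> exp (d * L) / d" .
    hence "L\<^sup>2 \<le> (exp (d * L) / d)\<^sup>2" using L0 by (intro power_mono) auto
    also have "\<dots> = exp (2 * d * L) / d\<^sup>2" by (simp add: power_divide exp2 mult_ac)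
    finally have "L\<^sup>2 * exp (- p * L) \<le> exp (2 * d * L) / d\<^sup>2 * exp (- p * L)"
      by (intro mult_right_mono) auto
    also have "\<dots> = (1 / d\<^sup>2) * exp (- (p - 2 * d) * L)"
    proof -
      have "exp (2 * d * L) * exp (- p * L) = exp (- (p - 2 * d) * L)"
        by (subst exp_add[symmetric]) (simp add: algebra_simps)
      thus ?thesis by simp
    qed
    finally show ?thesis using L0 unfolding L_def by simp
  qed
  show ?thesis by (rule summable_comparison_test'[OF gs, of 0]) (rule bnd)
qed

definition Zt :: "real \<Rightarrow> real" where
  "Zt \<sigma> = (\<Sum>n. (exp (- \<sigma> * ln (real (Suc n))))\<^sup>2)"

lemma summable_Zt: "\<sigma> > 1/2 \<Longrightarrow> summable (\<lambda>n. (exp (- \<sigma> * ln (real (Suc n))))\<^sup>2)"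
  using summable_exp_ln[of "2 * \<sigma>"] by (simp add: exp2 mult.assoc)

lemma dseries_bound:
  assumes "summable (\<lambda>n. (cmod (a (Suc n)))\<^sup>2)" "Re s > 1/2"
  shows "summable (\<lambda>n. cmod (a (Suc n) * pw (Suc n) s))"
    and "summable (\<lambda>n. a (Suc n) * pw (Suc n) s)"
    and "cmod (dseries a s) \<le> sqrt (\<Sum>n. (cmod (a (Suc n)))\<^sup>2) * sqrt (Zt (Re s))"
proof -
  have eq: "cmod (a (Suc n) * pw (Suc n) s) = \<bar>cmod (a (Suc n)) * exp (- Re s * ln (real (Suc n)))\<bar>" for n
    by (simp add: norm_mult norm_pw)
  note cs = cs_series[OF assms(1) summable_Zt[OF assms(2)]]
  show s1: "summable (\<lambda>n. cmod (a (Suc n) * pw (Suc n) s))" unfolding eq by (rule cs(1))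
  thus s2: "summable (\<lambda>n. a (Suc n) * pw (Suc n) s)" by (rule summable_norm_cancel)
  have "cmod (dseries a s) \<le> (\<Sum>n. cmod (a (Suc n) * pw (Suc n) s))"
    unfolding dseries_pw by (rule summable_norm[OF s1])
  also have "\<dots> \<le> sqrt (\<Sum>n. (cmod (a (Suc n)))\<^sup>2) * sqrt (Zt (Re s))"
    unfolding eq Zt_def by (rule cs(2))
  finally show "cmod (dseries a s) \<le> sqrt (\<Sum>n. (cmod (a (Suc n)))\<^sup>2) * sqrt (Zt (Re s))" .
qed




lemma dseries_deriv:
  assumes a: "summable (\<lambda>n. (cmod (a (Suc n)))\<^sup>2)" and w: "Re w > 1/2"
  shows "summable (\<lambda>n. a (Suc n) * (- of_real (ln (real (Suc n)))) * pw (Suc n) w)"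
    and "deriv (dseries a) w = (\<Sum>n. a (Suc n) * (- of_real (ln (real (Suc n)))) * pw (Suc n) w)"
proof -
  define \<sigma>0 where "\<sigma>0 = (1/2 + Re w) / 2"
  have s0: "\<sigma>0 > 1/2" "\<sigma>0 < Re w" using w by (simp_all add: \<sigma>0_def)
  define S where "S = {z. Re z > \<sigma>0}"
  define f where "f n z = a (Suc n) * pw (Suc n) z" for n z
  define f' where "f' n z = a (Suc n) * (- of_real (ln (real (Suc n)))) * pw (Suc n) z" for n z
  define M where "M n = cmod (a (Suc n)) * (ln (real (Suc n)) * exp (- \<sigma>0 * ln (real (Suc n))))" for n
  have der: "(f n has_field_derivative f' n z) (at z within S)" for n z
    unfolding f_def f'_def pw_def by (auto intro!: derivative_eq_intros simp: mult_ac)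
  have Mb: "norm (f' n z) \<le> M n" if "z \<in> S" for n z
  proof -
    have L0: "ln (real (Suc n)) \<ge> 0" by simp
    have "exp (- Re z * ln (real (Suc n))) \<le> exp (- \<sigma>0 * ln (real (Suc n)))"
    proof -
      have "\<sigma>0 * ln (real (Suc n)) \<le> Re z * ln (real (Suc n))"
        using that L0 by (intro mult_right_mono) (auto simp: S_def)
      thus ?thesis by simp
    qed
    hence "ln (real (Suc n)) * exp (- Re z * ln (real (Suc n))) \<le> ln (real (Suc n)) * exp (- \<sigma>0 * ln (real (Suc n)))"
      by (rule mult_left_mono[OF _ L0])
    hence "cmod (a (Suc n)) * (ln (real (Suc n)) * exp (- Re z * ln (real (Suc n)))) \<le> M n"
      unfolding M_def by (rule mult_left_mono) auto
    moreover have "norm (f' n z) = cmod (a (Suc n)) * (ln (real (Suc n)) * exp (- Re z * ln (real (Suc n))))"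
      unfolding f'_def using L0 by (simp add: norm_mult norm_pw del: of_nat_Suc)
    ultimately show ?thesis by simp
  qed
  have Ms: "summable M"
  proof -
    have "summable (\<lambda>n. (ln (real (Suc n)) * exp (- \<sigma>0 * ln (real (Suc n))))\<^sup>2)"
      using summable_ln2_exp_ln[of "2 * \<sigma>0"] s0 by (simp add: power_mult_distrib exp2 mult.assoc)
    from cs_series(1)[OF a this] show ?thesis
      unfolding M_def by (simp add: abs_mult)
  qed
  have uc: "uniformly_convergent_on S (\<lambda>n x. \<Sum>i<n. f' i x)"
    by (rule Weierstrass_m_test'_ev[OF always_eventually Ms]) (use Mb in auto)
  have wS: "w \<in> S" using s0 by (simp add: S_def)
  have openS: "open S" unfolding S_def by (rule open_halfspace_Re_gt)
  have sw: "summable (\<lambda>n. f n w)" unfolding f_def using dseries_bound(2)[OF a w] .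
  note hs = has_field_derivative_series'[OF _ der uc wS sw, of w]
  have conv: "convex S" unfolding S_def by (rule convex_halfspace_Re_gt)
  have intS: "w \<in> interior S" using wS openS by (simp add: interior_open)
  have "((\<lambda>x. \<Sum>n. f n x) has_field_derivative (\<Sum>n. f' n w)) (at w)"
    using hs(2)[OF conv intS] .
  moreover have "(\<lambda>x. \<Sum>n. f n x) = dseries a"
    by (rule ext) (simp add: f_def dseries_pw)
  ultimately have "(dseries a has_field_derivative (\<Sum>n. f' n w)) (at w)" by simp
  thus "deriv (dseries a) w = (\<Sum>n. a (Suc n) * (- of_real (ln (real (Suc n)))) * pw (Suc n) w)"
    unfolding f'_def by (rule DERIV_imp_deriv)
  show "summable (\<lambda>n. a (Suc n) * (- of_real (ln (real (Suc n)))) * pw (Suc n) w)"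
    using summable_comparison_test'[OF Ms, of 0 "\<lambda>n. f' n w"] Mb[OF wS] by (simp add: f'_def)
qed

lemma mink:
  fixes v :: "nat \<Rightarrow> nat \<Rightarrow> complex" and w :: "nat \<Rightarrow> complex" and r :: "nat \<Rightarrow> real"
  assumes vb: "\<And>k K. (\<Sum>n<K. (cmod (v k (Suc n)))\<^sup>2) \<le> (r k)\<^sup>2"
    and r0: "\<And>k. r k \<ge> 0" and ws: "summable (\<lambda>k. cmod (w k) * r k)"
  shows "\<And>n. summable (\<lambda>k. w k * v k (Suc n))"
    and "summable (\<lambda>n. (cmod (\<Sum>k. w k * v k (Suc n)))\<^sup>2)"
    and "(\<Sum>n. (cmod (\<Sum>k. w k * v k (Suc n)))\<^sup>2) \<le> (\<Sum>k. cmod (w k) * r k)\<^sup>2"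
proof -
  define S where "S = (\<Sum>k. cmod (w k) * r k)"
  have S0: "S \<ge> 0" unfolding S_def by (intro suminf_nonneg ws) (simp add: r0)
  have vpt: "cmod (v k (Suc n)) \<le> r k" for k n
  proof -
    have "(cmod (v k (Suc n)))\<^sup>2 \<le> (\<Sum>i<Suc n. (cmod (v k (Suc i)))\<^sup>2)"
      by (rule member_le_sum[where f = "\<lambda>i. (cmod (v k (Suc i)))\<^sup>2" and i = n]) auto
    also have "\<dots> \<le> (r k)\<^sup>2" by (rule vb)
    finally show ?thesis using r0[of k] by (simp add: abs_le_square_iff power2_le_iff_abs_le)
  qed
  show sm: "summable (\<lambda>k. w k * v k (Suc n))" for n
    by (rule summable_comparison_test'[OF ws, of 0]) (simp add: norm_mult mult_left_mono vpt)
  define u where "u n = (\<Sum>k. w k * v k (Suc n))" for n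
  define F where "F N n = (\<Sum>k<N. w k * v k (Suc n))" for N n
  have FL: "L2_set (\<lambda>n. cmod (F N n)) {..<K} \<le> (\<Sum>k<N. cmod (w k) * r k)" for N K
  proof (induction N)
    case 0 thus ?case by (simp add: F_def L2_set_def)
  next
    case (Suc N)
    have "L2_set (\<lambda>n. cmod (F (Suc N) n)) {..<K} \<le> L2_set (\<lambda>n. cmod (F N n) + cmod (w N * v N (Suc n))) {..<K}"
      by (rule L2_set_mono) (auto simp: F_def norm_triangle_ineq)
    also have "\<dots> \<le> L2_set (\<lambda>n. cmod (F N n)) {..<K} + L2_set (\<lambda>n. cmod (w N * v N (Suc n))) {..<K}"
      by (rule L2_set_triangle_ineq)
    also have "L2_set (\<lambda>n. cmod (w N * v N (Suc n))) {..<K} = cmod (w N) * L2_set (\<lambda>n. cmod (v N (Suc n))) {..<K}"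
      by (simp add: L2_set_right_distrib norm_mult)
    also have "L2_set (\<lambda>n. cmod (v N (Suc n))) {..<K} \<le> r N"
      unfolding L2_set_def using vb[of N K] r0[of N] by (simp add: real_sqrt_le_iff real_le_lsqrt)
    hence "cmod (w N) * L2_set (\<lambda>n. cmod (v N (Suc n))) {..<K} \<le> cmod (w N) * r N"
      by (intro mult_left_mono) auto
    finally show ?case using Suc.IH by simp
  qed
  have FS: "L2_set (\<lambda>n. cmod (F N n)) {..<K} \<le> S" for N K
    using FL[of N K] sum_le_suminf[OF ws, of "{..<N}"] r0 unfolding S_def by (force intro: order_trans)
  have uL: "L2_set (\<lambda>n. cmod (u n)) {..<K} \<le> S" for K
  proof (rule LIMSEQ_le_const2)
    show "(\<lambda>N. L2_set (\<lambda>n. cmod (F N n)) {..<K}) \<longlonglongrightarrow> L2_set (\<lambda>n. cmod (u n)) {..<K}"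
      unfolding L2_set_def F_def u_def
      by (intro tendsto_intros summable_LIMSEQ sm)
    show "\<exists>N. \<forall>n\<ge>N. L2_set (\<lambda>n'. cmod (F n n')) {..<K} \<le> S" using FS by blast
  qed
  have us: "(\<Sum>n<K. (cmod (u n))\<^sup>2) \<le> S\<^sup>2" for K
  proof -
    have "sqrt (\<Sum>n<K. (cmod (u n))\<^sup>2) \<le> S" using uL[of K] by (simp add: L2_set_def)
    thus ?thesis using S0 by (simp add: real_sqrt_le_iff sqrt_le_D real_sqrt_le_mono)
  qed
  show s2: "summable (\<lambda>n. (cmod (\<Sum>k. w k * v k (Suc n)))\<^sup>2)"
  proof (rule bounded_imp_summable)
    fix n show "(\<Sum>k\<le>n. (cmod (\<Sum>ka. w ka * v ka (Suc k)))\<^sup>2) \<le> S\<^sup>2"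
      using us[of "Suc n"] unfolding u_def lessThan_Suc_atMost .
  qed simp
  show "(\<Sum>n. (cmod (\<Sum>k. w k * v k (Suc n)))\<^sup>2) \<le> (\<Sum>k. cmod (w k) * r k)\<^sup>2"
    using suminf_le_const[OF s2, of "S\<^sup>2"] us unfolding u_def S_def by simp
qed




definition Dc :: "(nat \<Rightarrow> complex) \<Rightarrow> nat set \<Rightarrow> nat \<Rightarrow> nat \<Rightarrow> complex" where
  "Dc c S j m = (\<Sum>g\<in>{g \<in> PiE {..<j} (\<lambda>_. S). prod g {..<j} = m}. \<Prod>i<j. c (g i))"

definition Psi :: "(nat \<Rightarrow> complex) \<Rightarrow> nat \<Rightarrow> complex \<Rightarrow> complex" where
  "Psi c N s = (\<Sum>k\<in>{2..N}. c k * pw k s)"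

definition Pexp :: "(nat \<Rightarrow> complex) \<Rightarrow> real \<Rightarrow> nat \<Rightarrow> nat \<Rightarrow> complex \<Rightarrow> complex" where
  "Pexp c lam N J s = exp (- of_real lam * c 1) * (\<Sum>j<J. (- of_real lam * Psi c N s) ^ j /\<^sub>R fact j)"

definition pco :: "(nat \<Rightarrow> complex) \<Rightarrow> real \<Rightarrow> nat \<Rightarrow> nat \<Rightarrow> nat \<Rightarrow> complex" where
  "pco c lam N J m = exp (- of_real lam * c 1) * (\<Sum>j<J. ((- of_real lam) ^ j /\<^sub>R fact j) * Dc c {2..N} j m)"

definition gco :: "(nat \<Rightarrow> complex) \<Rightarrow> real \<Rightarrow> nat \<Rightarrow> complex" where
  "gco c lam m = exp (- of_real lam * c 1) * (\<Sum>j<m. ((- of_real lam) ^ j /\<^sub>R fact j) * Dc c {2..m} j m)"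

lemma PiE_prod_bounds:
  assumes "g \<in> PiE {..<j} (\<lambda>_. {2..N::nat})"
  shows "2 ^ j \<le> prod g {..<j}" "prod g {..<j} \<le> N ^ j"
proof -
  have "(\<Prod>i<j. (2::nat)) \<le> prod g {..<j}"
    using assms by (intro prod_mono) (auto simp: PiE_def Pi_def)
  thus "2 ^ j \<le> prod g {..<j}" by simp
  have "prod g {..<j} \<le> (\<Prod>i<j. N)"
    using assms by (intro prod_mono) (auto simp: PiE_def Pi_def)
  thus "prod g {..<j} \<le> N ^ j" by simp
qed

lemma psi_pow:
  assumes "N \<ge> 1" "j \<le> J"
  shows "Psi c N s ^ j = (\<Sum>m\<in>{1..N^J}. Dc c {2..N} j m * pw m s)"
proof -
  define A where "A = PiE {..<j} (\<lambda>_::nat. {2..N})"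
  have finA: "finite A" unfolding A_def by (intro finite_PiE) auto
  have "Psi c N s ^ j = (\<Prod>i<j. \<Sum>k\<in>{2..N}. c k * pw k s)" by (simp add: Psi_def)
  also have "\<dots> = (\<Sum>g\<in>A. \<Prod>i<j. c (g i) * pw (g i) s)"
    unfolding A_def by (rule prod_sum_PiE) auto
  also have "\<dots> = (\<Sum>g\<in>A. (\<Prod>i<j. c (g i)) * pw (prod g {..<j}) s)"
  proof (rule sum.cong[OF refl])
    fix g assume g: "g \<in> A"
    have "pw (prod g {..<j}) s = (\<Prod>i<j. pw (g i) s)"
      using g by (intro pw_prod) (auto simp: A_def PiE_def Pi_def)
    thus "(\<Prod>i<j. c (g i) * pw (g i) s) = (\<Prod>i<j. c (g i)) * pw (prod g {..<j}) s"
      by (simp add: prod.distrib)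
  qed
  also have "\<dots> = (\<Sum>m\<in>{1..N^J}. \<Sum>g\<in>{g \<in> A. prod g {..<j} = m}. (\<Prod>i<j. c (g i)) * pw (prod g {..<j}) s)"
  proof (rule sum.group[symmetric, OF finA])
    show "(\<lambda>g. prod g {..<j}) ` A \<subseteq> {1..N^J}"
    proof
      fix m assume "m \<in> (\<lambda>g. prod g {..<j}) ` A"
      then obtain g where g: "g \<in> A" "m = prod g {..<j}" by auto
      have m2: "2 ^ j \<le> m" "m \<le> N ^ j" using PiE_prod_bounds[of g j N] g by (auto simp: A_def)
      moreover have "1 \<le> m" using m2(1) by (metis le_trans one_le_numeral one_le_power)
      moreover have "N ^ j \<le> N ^ J" using assms by (intro power_increasing) auto
      ultimately show "m \<in> {1..N^J}" by auto
    qed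
  qed simp
  also have "\<dots> = (\<Sum>m\<in>{1..N^J}. Dc c {2..N} j m * pw m s)"
    unfolding Dc_def A_def sum_distrib_right by (intro sum.cong refl) auto
  finally show ?thesis .
qed

lemma pexp_coef:
  assumes "N \<ge> 1"
  shows "Pexp c lam N J s = (\<Sum>m\<in>{1..N^J}. pco c lam N J m * pw m s)"
proof -
  have "Pexp c lam N J s = exp (- of_real lam * c 1) * (\<Sum>j<J. ((- of_real lam) ^ j /\<^sub>R fact j) * Psi c N s ^ j)"
    unfolding Pexp_def power_mult_distrib by (simp add: scaleR_conv_of_real mult_ac)
  also have "\<dots> = exp (- of_real lam * c 1) * (\<Sum>j<J. ((- of_real lam) ^ j /\<^sub>R fact j) * (\<Sum>m\<in>{1..N^J}. Dc c {2..N} j m * pw m s))"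
    by (intro arg_cong2[where f="(*)"] sum.cong refl) (subst psi_pow[OF assms], auto)
  also have "\<dots> = (\<Sum>m\<in>{1..N^J}. pco c lam N J m * pw m s)"
    unfolding pco_def sum_distrib_left sum_distrib_right
    by (subst sum.swap) (simp add: mult_ac)
  finally show ?thesis .
qed

lemma Dc_big:
  assumes "m < 2 ^ j"
  shows "Dc c {2..N} j m = 0"
proof -
  have E: "{g \<in> PiE {..<j} (\<lambda>_. {2..N}). prod g {..<j} = m} = {}"
  proof -
    have False if "g \<in> PiE {..<j} (\<lambda>_. {2..N})" "prod g {..<j} = m" for g
    proof -
      have "2 ^ j \<le> m" using PiE_prod_bounds(1)[OF that(1)] that(2) by simp
      thus False using assms by simp
    qed
    thus ?thesis by blast
  qed
  show ?thesis unfolding Dc_def E by simp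
qed

lemma Dc_restrict:
  assumes "1 \<le> m" "m \<le> N"
  shows "Dc c {2..N} j m = Dc c {2..m} j m"
proof -
  have key: "(g \<in> PiE {..<j} (\<lambda>_. {2..N})) = (g \<in> PiE {..<j} (\<lambda>_. {2..m}))"
    if p: "prod g {..<j} = m" for g
  proof -
    have le: "g i \<le> m" if "i < j" for i
    proof -
      have "g i dvd prod g {..<j}" using that by (intro dvd_prodI) auto
      thus ?thesis using p assms(1) by (auto intro: dvd_imp_le)
    qed
    have le2: "g i \<le> N" if "i < j" for i using le[OF that] assms(2) by simp
    show ?thesis using le le2 by (auto simp: PiE_def Pi_def)
  qed
  have E: "{g \<in> PiE {..<j} (\<lambda>_. {2..N}). prod g {..<j} = m} = {g \<in> PiE {..<j} (\<lambda>_. {2..m}). prod g {..<j} = m}"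
    using key by blast
  show ?thesis unfolding Dc_def E ..
qed

lemma pco_gco:
  assumes "1 \<le> m" "m \<le> N" "m \<le> J"
  shows "pco c lam N J m = gco c lam m"
proof -
  have "(\<Sum>j<J. ((- of_real lam) ^ j /\<^sub>R fact j) * Dc c {2..N} j m) = (\<Sum>j<m. ((- of_real lam) ^ j /\<^sub>R fact j) * Dc c {2..N} j m)"
  proof (rule sum.mono_neutral_right)
    show "\<forall>j\<in>{..<J} - {..<m}. ((- of_real lam) ^ j /\<^sub>R fact j) * Dc c {2..N} j m = 0"
    proof
      fix j assume "j \<in> {..<J} - {..<m}"
      hence "m \<le> j" by auto
      hence "m < 2 ^ j" using less_exp[of j] by linarith
      thus "((- of_real lam) ^ j /\<^sub>R fact j) * Dc c {2..N} j m = 0" by (simp add: Dc_big)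
    qed
  qed (use assms in auto)
  also have "\<dots> = (\<Sum>j<m. ((- of_real lam) ^ j /\<^sub>R fact j) * Dc c {2..m} j m)"
    by (intro sum.cong refl) (subst Dc_restrict[OF assms(1,2)], rule refl)
  finally show ?thesis unfolding pco_def gco_def by simp
qed

definition Ac :: "(nat \<Rightarrow> complex) \<Rightarrow> nat \<Rightarrow> real \<Rightarrow> real" where
  "Ac c N \<eta> = (\<Sum>k\<in>{2..N}. cmod (c k) * exp (- \<eta> * ln (real k)))"

lemma Psi_bound: "cmod (Psi c N s) \<le> Ac c N (Re s)"
  unfolding Psi_def Ac_def
  by (rule order_trans[OF norm_sum]) (simp add: norm_mult norm_pw)

lemma dpartial_split:
  assumes "N \<ge> 1"
  shows "dpartial c N s = c 1 + Psi c N s"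
proof -
  have "{1..N} = insert 1 {2..N}" using assms by auto
  thus ?thesis unfolding dpartial_pw Psi_def by simp
qed

definition Rt :: "real \<Rightarrow> nat \<Rightarrow> real" where
  "Rt a J = (\<Sum>n. a ^ (n + J) / fact (n + J))"

lemma exp_tail:
  fixes z :: complex
  assumes "cmod z \<le> a"
  shows "cmod (exp z - (\<Sum>j<J. z ^ j /\<^sub>R fact j)) \<le> Rt a J"
proof -
  have sz: "summable (\<lambda>n. z ^ n /\<^sub>R fact n)" using exp_converges[of z] by (simp add: sums_iff)
  have sa: "summable (\<lambda>n. a ^ n / fact n)" using exp_converges[of a] by (simp add: sums_iff divide_inverse mult_ac)
  have "exp z = (\<Sum>n. z ^ (n + J) /\<^sub>R fact (n + J)) + (\<Sum>j<J. z ^ j /\<^sub>R fact j)"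
    using suminf_split_initial_segment[OF sz, of J] exp_converges[of z] by (simp add: sums_iff)
  hence "exp z - (\<Sum>j<J. z ^ j /\<^sub>R fact j) = (\<Sum>n. z ^ (n + J) /\<^sub>R fact (n + J))" by simp
  also have "cmod \<dots> \<le> Rt a J" unfolding Rt_def
  proof (rule norm_suminf_le)
    show "summable (\<lambda>n. a ^ (n + J) / fact (n + J))"
      using summable_ignore_initial_segment[OF sa, of J] .
    fix n
    have "cmod (z ^ (n + J) /\<^sub>R fact (n + J)) = cmod z ^ (n + J) / fact (n + J)"
      by (simp add: norm_power divide_inverse mult.commute)
    also have "\<dots> \<le> a ^ (n + J) / fact (n + J)"
      using assms by (intro divide_right_mono power_mono) auto
    finally show "cmod (z ^ (n + J) /\<^sub>R fact (n + J)) \<le> a ^ (n + J) / fact (n + J)" .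
  qed
  finally show ?thesis .
qed

lemma Rt_lim: "(\<lambda>J. Rt a J) \<longlonglongrightarrow> 0"
proof -
  have sa: "(\<lambda>n. a ^ n / fact n) sums exp a" using exp_converges[of a] by (simp add: divide_inverse mult_ac)
  have eq: "Rt a J = exp a - (\<Sum>j<J. a ^ j / fact j)" for J
    using suminf_split_initial_segment[OF sums_summable[OF sa], of J] sa unfolding Rt_def by (simp add: sums_iff)
  have "(\<lambda>J. exp a - (\<Sum>j<J. a ^ j / fact j)) \<longlonglongrightarrow> exp a - exp a"
    using sa unfolding sums_def by (intro tendsto_intros)
  thus ?thesis unfolding eq by simp
qed

lemma Rt_nonneg:
  assumes "a \<ge> 0" shows "Rt a J \<ge> 0"
proof -
  have sa: "summable (\<lambda>n. a ^ n / fact n)" using exp_converges[of a] by (simp add: sums_iff divide_inverse mult_ac)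
  show ?thesis unfolding Rt_def
    by (rule suminf_nonneg[OF summable_ignore_initial_segment[OF sa, of J]]) (use assms in simp)
qed

lemma Pexp_lim:
  assumes "N \<ge> 1"
  shows "(\<lambda>J. Pexp c lam N J s) \<longlonglongrightarrow> exp (- of_real lam * dpartial c N s)"
proof -
  have "(\<lambda>J. Pexp c lam N J s) \<longlonglongrightarrow> exp (- of_real lam * c 1) * exp (- of_real lam * Psi c N s)"
    unfolding Pexp_def using exp_converges[of "- of_real lam * Psi c N s"] unfolding sums_def
    by (intro tendsto_intros)
  also have "exp (- of_real lam * c 1) * exp (- of_real lam * Psi c N s) = exp (- of_real lam * c 1 + - of_real lam * Psi c N s)"
    by (rule exp_add[symmetric])
  also have "\<dots> = exp (- of_real lam * dpartial c N s)"
    using assms by (simp add: dpartial_split distrib_left)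
  finally show ?thesis .
qed




lemma le_at_right0:
  fixes f :: "real \<Rightarrow> real"
  assumes "\<And>x. x > 0 \<Longrightarrow> X \<le> f x" "(f \<longlongrightarrow> L) (at_right 0)"
  shows "X \<le> L"
proof (rule tendsto_le[OF trivial_limit_at_right_real assms(2) tendsto_const])
  show "\<forall>\<^sub>F x in at_right 0. X \<le> f x"
    using eventually_at_right_less[of "0::real"] by eventually_elim (use assms(1) in auto)
qed

locale Gctx =
  fixes c :: "nat \<Rightarrow> complex" and \<epsilon> :: real
  assumes G: "G0 c" and \<epsilon>: "\<epsilon> > 0" and H: "dseries c ` halfplane 0 \<subseteq> halfplane (1/2 + \<epsilon>)"

context Gctx
begin

lemma RePhi: "Re s > 0 \<Longrightarrow> Re (dseries c s) > 1/2 + \<epsilon>"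
  using H by (auto simp: halfplane_def)

lemma unif_pt:
  assumes "Re s > 0"
  shows "(\<lambda>N. dpartial c N s) \<longlonglongrightarrow> dseries c s"
proof -
  have "uniform_limit (halfplane (Re s / 2)) (dpartial c) (dseries c) sequentially"
    using G assms unfolding G0_def by auto
  moreover have "s \<in> halfplane (Re s / 2)" using assms by (simp add: halfplane_def)
  ultimately show ?thesis by (rule tendsto_uniform_limitI)
qed

lemma unif_line:
  assumes "\<eta> > 0" "\<delta> > 0"
  shows "\<exists>N0. \<forall>N\<ge>N0. \<forall>t. cmod (dpartial c N (of_real \<eta> + \<i> * of_real t) - dseries c (of_real \<eta> + \<i> * of_real t)) < \<delta>"
proof -
  have "uniform_limit (halfplane (\<eta> / 2)) (dpartial c) (dseries c) sequentially"
    using G assms unfolding G0_def by auto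
  hence "\<forall>\<^sub>F n in sequentially. \<forall>x\<in>halfplane (\<eta> / 2). dist (dpartial c n x) (dseries c x) < \<delta>"
    using assms(2) unfolding uniform_limit_iff by blast
  then obtain N0 where N0: "\<And>N x. N \<ge> N0 \<Longrightarrow> x \<in> halfplane (\<eta> / 2) \<Longrightarrow> dist (dpartial c N x) (dseries c x) < \<delta>"
    unfolding eventually_sequentially by blast
  have "of_real \<eta> + \<i> * of_real t \<in> halfplane (\<eta> / 2)" for t using assms by (simp add: halfplane_def)
  thus ?thesis using N0 by (auto simp: dist_norm)
qed

lemma Pexp_line_bound:
  assumes "\<eta> > 0" "lam \<ge> 0" "N \<ge> 1"
    and dl: "\<forall>t. cmod (dpartial c N (of_real \<eta> + \<i> * of_real t) - dseries c (of_real \<eta> + \<i> * of_real t)) < \<delta>"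
  shows "cmod (Pexp c lam N J (of_real \<eta> + \<i> * of_real t)) \<le> exp (- lam * (1/2 + \<epsilon> - \<delta>)) + exp (- lam * Re (c 1)) * Rt (lam * Ac c N \<eta>) J"
proof -
  define s where "s = of_real \<eta> + \<i> * of_real t"
  have Res: "Re s = \<eta>" by (simp add: s_def)
  define E where "E = exp (- of_real lam * c 1)"
  define x where "x = - of_real lam * Psi c N s"
  define part where "part = (\<Sum>j<J. x ^ j /\<^sub>R fact j)"
  have P: "Pexp c lam N J s = E * part" by (simp add: Pexp_def E_def x_def part_def)
  have ex: "exp (- of_real lam * dpartial c N s) = E * exp x"
  proof -
    have "E * exp x = exp (- of_real lam * c 1 + x)" unfolding E_def by (rule exp_add[symmetric])
    also have "\<dots> = exp (- of_real lam * dpartial c N s)"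
      using assms(3) by (simp add: x_def dpartial_split distrib_left)
    finally show ?thesis by simp
  qed
  have "Pexp c lam N J s = exp (- of_real lam * dpartial c N s) + E * (part - exp x)"
    unfolding P ex by (simp add: algebra_simps)
  hence "cmod (Pexp c lam N J s) \<le> cmod (exp (- of_real lam * dpartial c N s)) + cmod (E * (part - exp x))"
    by (simp only: norm_triangle_ineq)
  also have "cmod (exp (- of_real lam * dpartial c N s)) \<le> exp (- lam * (1/2 + \<epsilon> - \<delta>))"
  proof -
    have "Re (dseries c s) > 1/2 + \<epsilon>" using RePhi assms(1) Res by simp
    moreover have "\<bar>Re (dpartial c N s - dseries c s)\<bar> < \<delta>"
      using dl abs_Re_le_cmod[of "dpartial c N s - dseries c s"] unfolding s_def by (meson le_less_trans)
    ultimately have "Re (dpartial c N s) \<ge> 1/2 + \<epsilon> - \<delta>" by auto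
    hence "lam * (1/2 + \<epsilon> - \<delta>) \<le> lam * Re (dpartial c N s)" using assms(2) by (intro mult_left_mono)
    thus ?thesis by simp
  qed
  also have "cmod (E * (part - exp x)) \<le> exp (- lam * Re (c 1)) * Rt (lam * Ac c N \<eta>) J"
  proof -
    have "cmod x \<le> lam * Ac c N \<eta>"
      using Psi_bound[of c N s] assms(2) Res by (simp add: x_def norm_mult mult_left_mono)
    hence "cmod (exp x - part) \<le> Rt (lam * Ac c N \<eta>) J" unfolding part_def by (rule exp_tail)
    moreover have "cmod E = exp (- lam * Re (c 1))" by (simp add: E_def)
    ultimately show ?thesis by (simp add: norm_mult norm_minus_commute mult_left_mono)
  qed
  finally show ?thesis unfolding s_def by simp
qed

lemma parseval_pco:
  assumes "\<eta> > 0" "lam \<ge> 0" "N \<ge> 1"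
    and dl: "\<forall>t. cmod (dpartial c N (of_real \<eta> + \<i> * of_real t) - dseries c (of_real \<eta> + \<i> * of_real t)) < \<delta>"
  shows "(\<Sum>m\<in>{1..N^J}. (cmod (pco c lam N J m))\<^sup>2 * (exp (- \<eta> * ln (real m)))\<^sup>2)
           \<le> (exp (- lam * (1/2 + \<epsilon> - \<delta>)) + exp (- lam * Re (c 1)) * Rt (lam * Ac c N \<eta>) J)\<^sup>2"
proof -
  define e where "e m = pco c lam N J m * of_real (exp (- \<eta> * ln (real m)))" for m
  define f where "f m = - ln (real m)" for m
  have inj: "inj_on f {1..N^J}" unfolding f_def by (rule inj_onI) auto
  have "(\<Sum>m\<in>{1..N^J}. (cmod (e m))\<^sup>2) \<le> (exp (- lam * (1/2 + \<epsilon> - \<delta>)) + exp (- lam * Re (c 1)) * Rt (lam * Ac c N \<eta>) J)\<^sup>2"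
  proof (rule parseval_finite[OF _ inj])
    fix t
    have "(\<Sum>m\<in>{1..N^J}. e m * exp (\<i> * of_real (t * f m))) = (\<Sum>m\<in>{1..N^J}. pco c lam N J m * pw m (of_real \<eta> + \<i> * of_real t))"
      unfolding e_def f_def pw_line by (simp add: mult_ac)
    also have "\<dots> = Pexp c lam N J (of_real \<eta> + \<i> * of_real t)" using assms(3) by (simp add: pexp_coef)
    finally show "cmod (\<Sum>m\<in>{1..N^J}. e m * exp (\<i> * of_real (t * f m))) \<le> exp (- lam * (1/2 + \<epsilon> - \<delta>)) + exp (- lam * Re (c 1)) * Rt (lam * Ac c N \<eta>) J"
      using Pexp_line_bound[OF assms] by simp
  qed simp
  thus ?thesis by (simp add: e_def norm_mult power_mult_distrib)
qed

end




context Gctx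
begin

lemma G1_weighted:
  assumes lam: "lam \<ge> 0" and eta: "\<eta> > 0" and del: "\<delta> > 0"
  shows "(\<Sum>m\<in>{1..K}. (cmod (gco c lam m))\<^sup>2 * (exp (- \<eta> * ln (real m)))\<^sup>2) \<le> (exp (- lam * (1/2 + \<epsilon> - \<delta>)))\<^sup>2"
proof -
  obtain N0 where N0: "\<And>N. N \<ge> N0 \<Longrightarrow> \<forall>t. cmod (dpartial c N (of_real \<eta> + \<i> * of_real t) - dseries c (of_real \<eta> + \<i> * of_real t)) < \<delta>"
    using unif_line[OF eta del] by blast
  define N where "N = max N0 (max K 1)"
  have N1: "N \<ge> 1" "N \<ge> K" "N \<ge> N0" by (auto simp: N_def)
  define X where "X = (\<Sum>m\<in>{1..K}. (cmod (gco c lam m))\<^sup>2 * (exp (- \<eta> * ln (real m)))\<^sup>2)"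
  define B where "B J = (exp (- lam * (1/2 + \<epsilon> - \<delta>)) + exp (- lam * Re (c 1)) * Rt (lam * Ac c N \<eta>) J)\<^sup>2" for J
  have "(\<lambda>J. B J) \<longlonglongrightarrow> (exp (- lam * (1/2 + \<epsilon> - \<delta>)) + exp (- lam * Re (c 1)) * 0)\<^sup>2"
    unfolding B_def by (intro tendsto_intros Rt_lim)
  moreover have "\<exists>J0. \<forall>J\<ge>J0. X \<le> B J"
  proof (intro exI allI impI)
    fix J assume J: "J \<ge> max K 1"
    have NJ: "N \<le> N ^ J" using power_increasing[of 1 J N] J N1 by simp
    have "X = (\<Sum>m\<in>{1..K}. (cmod (pco c lam N J m))\<^sup>2 * (exp (- \<eta> * ln (real m)))\<^sup>2)"
      unfolding X_def using N1 J by (intro sum.cong refl) (simp add: pco_gco)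
    also have "\<dots> \<le> (\<Sum>m\<in>{1..N^J}. (cmod (pco c lam N J m))\<^sup>2 * (exp (- \<eta> * ln (real m)))\<^sup>2)"
      using N1 NJ by (intro sum_mono2) auto
    also have "\<dots> \<le> B J" unfolding B_def
      by (rule parseval_pco[OF eta lam N1(1) N0[OF N1(3)]])
    finally show "X \<le> B J" .
  qed
  ultimately show ?thesis unfolding X_def by (intro LIMSEQ_le_const) auto
qed

lemma G1:
  assumes lam: "lam \<ge> 0"
  shows "(\<Sum>m\<in>{1..K}. (cmod (gco c lam m))\<^sup>2) \<le> exp (- lam * (1 + 2 * \<epsilon>))"
proof -
  have step: "(\<Sum>m\<in>{1..K}. (cmod (gco c lam m))\<^sup>2 * (exp (- \<eta> * ln (real m)))\<^sup>2) \<le> exp (- lam * (1 + 2 * \<epsilon>))"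
    if eta: "\<eta> > 0" for \<eta>
  proof (rule le_at_right0)
    show "(\<Sum>m\<in>{1..K}. (cmod (gco c lam m))\<^sup>2 * (exp (- \<eta> * ln (real m)))\<^sup>2) \<le> (exp (- lam * (1/2 + \<epsilon> - \<delta>)))\<^sup>2"
      if "\<delta> > 0" for \<delta> using G1_weighted[OF lam eta that] .
    have "((\<lambda>\<delta>. (exp (- lam * (1/2 + \<epsilon> - \<delta>)))\<^sup>2) \<longlongrightarrow> (exp (- lam * (1/2 + \<epsilon> - 0)))\<^sup>2) (at_right 0)"
      by (intro tendsto_intros)
    moreover have "(exp (- lam * (1/2 + \<epsilon> - 0)))\<^sup>2 = exp (- lam * (1 + 2 * \<epsilon>))"
      by (simp add: exp2 algebra_simps)
    ultimately show "((\<lambda>\<delta>. (exp (- lam * (1/2 + \<epsilon> - \<delta>)))\<^sup>2) \<longlongrightarrow> exp (- lam * (1 + 2 * \<epsilon>))) (at_right 0)"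
      by simp
  qed
  show ?thesis
  proof (rule le_at_right0[where f = "\<lambda>_. exp (- lam * (1 + 2 * \<epsilon>))", OF _ tendsto_const])
    fix \<eta> :: real assume eta: "\<eta> > 0"
    show "(\<Sum>m\<in>{1..K}. (cmod (gco c lam m))\<^sup>2) \<le> exp (- lam * (1 + 2 * \<epsilon>))"
    proof (rule tendsto_le[OF trivial_limit_at_right_real tendsto_const])
      show "((\<lambda>\<eta>. \<Sum>m\<in>{1..K}. (cmod (gco c lam m))\<^sup>2 * (exp (- \<eta> * ln (real m)))\<^sup>2) \<longlongrightarrow> (\<Sum>m\<in>{1..K}. (cmod (gco c lam m))\<^sup>2)) (at_right 0)"
      proof -
        have "((\<lambda>\<eta>. \<Sum>m\<in>{1..K}. (cmod (gco c lam m))\<^sup>2 * (exp (- \<eta> * ln (real m)))\<^sup>2) \<longlongrightarrow> (\<Sum>m\<in>{1..K}. (cmod (gco c lam m))\<^sup>2 * (exp (- 0 * ln (real m)))\<^sup>2)) (at_right 0)"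
          by (intro tendsto_intros)
        thus ?thesis by simp
      qed
      show "\<forall>\<^sub>F x in at_right 0. (\<Sum>m\<in>{1..K}. (cmod (gco c lam m))\<^sup>2 * (exp (- x * ln (real m)))\<^sup>2) \<le> exp (- lam * (1 + 2 * \<epsilon>))"
        using eventually_at_right_less[of "0::real"] by eventually_elim (rule step)
    qed
  qed
qed

lemma G1':
  assumes lam: "lam \<ge> 0"
  shows "summable (\<lambda>n. (cmod (gco c lam (Suc n)))\<^sup>2)"
    and "\<And>K. (\<Sum>n<K. (cmod (gco c lam (Suc n)))\<^sup>2) \<le> (exp (- lam * (1/2 + \<epsilon>)))\<^sup>2"
proof -
  have eq: "(exp (- lam * (1/2 + \<epsilon>)))\<^sup>2 = exp (- lam * (1 + 2 * \<epsilon>))" by (simp add: exp2 algebra_simps)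
  show b: "(\<Sum>n<K. (cmod (gco c lam (Suc n)))\<^sup>2) \<le> (exp (- lam * (1/2 + \<epsilon>)))\<^sup>2" for K
    using G1[OF lam, of K] unfolding eq sum_1K .
  show "summable (\<lambda>n. (cmod (gco c lam (Suc n)))\<^sup>2)"
  proof (rule bounded_imp_summable)
    fix n show "(\<Sum>k\<le>n. (cmod (gco c lam (Suc k)))\<^sup>2) \<le> (exp (- lam * (1/2 + \<epsilon>)))\<^sup>2"
      using b[of "Suc n"] unfolding lessThan_Suc_atMost .
  qed simp
qed

lemma dpartial_lim:
  assumes "summable (\<lambda>n. a (Suc n) * pw (Suc n) s)"
  shows "(\<lambda>N. dpartial a N s) \<longlonglongrightarrow> dseries a s"
  unfolding dpartial_pw sum_1K dseries_pw by (rule summable_LIMSEQ[OF assms])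

lemma G2:
  assumes lam: "lam \<ge> 0" and s: "Re s > 1/2"
  shows "dseries (gco c lam) s = exp (- of_real lam * dseries c s)"
proof -
  define \<sigma> where "\<sigma> = Re s"
  define \<eta> where "\<eta> = (\<sigma> - 1/2) / 2"
  define q where "q = \<sigma> - \<eta>"
  have eta: "\<eta> > 0" using s by (simp add: \<eta>_def \<sigma>_def)
  have q: "q > 1/2" using s unfolding q_def \<eta>_def \<sigma>_def by (simp add: field_simps)
  obtain N0 where N0: "\<And>N. N \<ge> N0 \<Longrightarrow> \<forall>t. cmod (dpartial c N (of_real \<eta> + \<i> * of_real t) - dseries c (of_real \<eta> + \<i> * of_real t)) < 1"
    using unif_line[OF eta, of 1] by auto
  define w where "w r m = exp (- r * ln (real m))" for r m
  define Tq where "Tq N = Zt q - (\<Sum>n<N. (w q (Suc n))\<^sup>2)" for N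
  define B0 where "B0 = exp (- lam * (1/2 + \<epsilon> - 1))"
  define x where "x N = dpartial (gco c lam) N s" for N
  define y where "y N = exp (- of_real lam * dpartial c N s)" for N
  have sq: "summable (\<lambda>n. (w q (Suc n))\<^sup>2)" unfolding w_def by (rule summable_Zt[OF q])
  have Tq0: "Tq N \<ge> 0" for N
    unfolding Tq_def Zt_def w_def[symmetric] using sum_le_suminf[OF sq, of "{..<N}"] by simp
  have claim: "cmod (y N - x N) \<le> B0 * sqrt (Tq N)" if N: "N \<ge> N0" "N \<ge> 1" for N
  proof -
    define Bd where "Bd J = exp (- lam * (1/2 + \<epsilon> - 1)) + exp (- lam * Re (c 1)) * Rt (lam * Ac c N \<eta>) J" for J
    have Ac0: "Ac c N \<eta> \<ge> 0" unfolding Ac_def by (intro sum_nonneg) auto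
    have Bd0: "Bd J \<ge> 0" for J
      unfolding Bd_def using Rt_nonneg[of "lam * Ac c N \<eta>" J] lam Ac0 by (intro add_nonneg_nonneg mult_nonneg_nonneg) auto
    have perJ: "cmod (Pexp c lam N J s - x N) \<le> Bd J * sqrt (Tq N)" if J: "J \<ge> N" for J
    proof -
      define A where "A = {1..N^J}"
      define Bs where "Bs = {1..N}"
      have NJ: "N \<le> N ^ J" using power_increasing[of 1 J N] J N by simp
      have BA: "Bs \<subseteq> A" using NJ by (auto simp: A_def Bs_def)
      have finA: "finite A" by (simp add: A_def)
      have "x N = (\<Sum>m\<in>Bs. pco c lam N J m * pw m s)"
        unfolding x_def dpartial_pw Bs_def using J by (intro sum.cong refl) (simp add: pco_gco)
      moreover have "Pexp c lam N J s = (\<Sum>m\<in>A. pco c lam N J m * pw m s)"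
        unfolding A_def using N by (simp add: pexp_coef)
      ultimately have "Pexp c lam N J s - x N = (\<Sum>m\<in>A - Bs. pco c lam N J m * pw m s)"
        by (simp only: sum_diff[OF finA BA])
      hence "cmod (Pexp c lam N J s - x N) \<le> (\<Sum>m\<in>A - Bs. cmod (pco c lam N J m * pw m s))"
        by (simp add: norm_sum)
      also have "\<dots> = (\<Sum>m\<in>A - Bs. (cmod (pco c lam N J m) * w \<eta> m) * w q m)"
      proof (intro sum.cong refl)
        fix m
        have "w \<eta> m * w q m = exp (- \<sigma> * ln (real m))"
          unfolding w_def by (subst exp_add[symmetric]) (simp add: q_def algebra_simps)
        thus "cmod (pco c lam N J m * pw m s) = (cmod (pco c lam N J m) * w \<eta> m) * w q m"
          by (simp add: norm_mult norm_pw \<sigma>_def mult.assoc)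
      qed
      also have "\<dots> \<le> sqrt (\<Sum>m\<in>A - Bs. (cmod (pco c lam N J m) * w \<eta> m)\<^sup>2) * sqrt (\<Sum>m\<in>A - Bs. (w q m)\<^sup>2)"
      proof -
        have "(\<Sum>m\<in>A - Bs. (cmod (pco c lam N J m) * w \<eta> m) * w q m)\<^sup>2 \<le> (\<Sum>m\<in>A - Bs. (cmod (pco c lam N J m) * w \<eta> m)\<^sup>2) * (\<Sum>m\<in>A - Bs. (w q m)\<^sup>2)"
          by (rule Cauchy_Schwarz_ineq_sum)
        hence "(\<Sum>m\<in>A - Bs. (cmod (pco c lam N J m) * w \<eta> m) * w q m) \<le> sqrt ((\<Sum>m\<in>A - Bs. (cmod (pco c lam N J m) * w \<eta> m)\<^sup>2) * (\<Sum>m\<in>A - Bs. (w q m)\<^sup>2))"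
          by (rule real_le_rsqrt)
        thus ?thesis by (simp add: real_sqrt_mult)
      qed
      also have "\<dots> \<le> Bd J * sqrt (Tq N)"
      proof (intro mult_mono)
        have "(\<Sum>m\<in>A - Bs. (cmod (pco c lam N J m) * w \<eta> m)\<^sup>2) \<le> (\<Sum>m\<in>A. (cmod (pco c lam N J m) * w \<eta> m)\<^sup>2)"
          using finA by (intro sum_mono2) auto
        also have "\<dots> \<le> (Bd J)\<^sup>2"
          using parseval_pco[OF eta lam N(2) N0[OF N(1)], of J]
          unfolding A_def Bd_def w_def by (simp add: power_mult_distrib)
        finally show "sqrt (\<Sum>m\<in>A - Bs. (cmod (pco c lam N J m) * w \<eta> m)\<^sup>2) \<le> Bd J"
          using Bd0[of J] by (simp add: real_sqrt_le_iff real_le_lsqrt)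
        have "(\<Sum>m\<in>A - Bs. (w q m)\<^sup>2) = (\<Sum>m\<in>A. (w q m)\<^sup>2) - (\<Sum>m\<in>Bs. (w q m)\<^sup>2)"
          by (rule sum_diff[OF finA BA])
        also have "\<dots> = (\<Sum>n<N^J. (w q (Suc n))\<^sup>2) - (\<Sum>n<N. (w q (Suc n))\<^sup>2)"
          unfolding A_def Bs_def sum_1K ..
        also have "\<dots> \<le> Tq N"
          unfolding Tq_def Zt_def w_def[symmetric] using sum_le_suminf[OF sq, of "{..<N^J}"] by simp
        finally show "sqrt (\<Sum>m\<in>A - Bs. (w q m)\<^sup>2) \<le> sqrt (Tq N)" by simp
      qed (use Bd0 in \<open>auto intro: sum_nonneg\<close>)
      finally show ?thesis .
    qed
    show ?thesis
    proof (rule tendsto_le[OF trivial_limit_sequentially])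
      show "(\<lambda>J. Bd J * sqrt (Tq N)) \<longlonglongrightarrow> B0 * sqrt (Tq N)"
      proof -
        have "(\<lambda>J. Bd J * sqrt (Tq N)) \<longlonglongrightarrow> (exp (- lam * (1/2 + \<epsilon> - 1)) + exp (- lam * Re (c 1)) * 0) * sqrt (Tq N)"
          unfolding Bd_def by (intro tendsto_intros Rt_lim)
        thus ?thesis by (simp add: B0_def)
      qed
      show "(\<lambda>J. cmod (Pexp c lam N J s - x N)) \<longlonglongrightarrow> cmod (y N - x N)"
        unfolding y_def by (intro tendsto_intros Pexp_lim N(2))
      show "\<forall>\<^sub>F J in sequentially. cmod (Pexp c lam N J s - x N) \<le> Bd J * sqrt (Tq N)"
        using eventually_ge_at_top[of N] by eventually_elim (rule perJ)
    qed
  qed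
  have sg: "summable (\<lambda>n. gco c lam (Suc n) * pw (Suc n) s)"
    using dseries_bound(2)[OF G1'(1)[OF lam] s] .
  have s0: "Re s > 0" using s by simp
  show ?thesis
  proof -
    have "cmod (exp (- of_real lam * dseries c s) - dseries (gco c lam) s) \<le> B0 * sqrt 0"
    proof (rule tendsto_le[OF trivial_limit_sequentially])
      show "(\<lambda>N. B0 * sqrt (Tq N)) \<longlonglongrightarrow> B0 * sqrt 0"
      proof -
        have "(\<lambda>N. Zt q - (\<Sum>n<N. (w q (Suc n))\<^sup>2)) \<longlonglongrightarrow> Zt q - Zt q"
          unfolding Zt_def w_def[symmetric] by (intro tendsto_intros summable_LIMSEQ sq)
        hence "(\<lambda>N. Tq N) \<longlonglongrightarrow> 0" unfolding Tq_def by simp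
        thus ?thesis by (intro tendsto_intros)
      qed
      show "(\<lambda>N. cmod (y N - x N)) \<longlonglongrightarrow> cmod (exp (- of_real lam * dseries c s) - dseries (gco c lam) s)"
        unfolding y_def x_def by (intro tendsto_intros unif_pt[OF s0] dpartial_lim[OF sg])
      show "\<forall>\<^sub>F N in sequentially. cmod (y N - x N) \<le> B0 * sqrt (Tq N)"
        using eventually_ge_at_top[of "max N0 1"] by eventually_elim (rule claim; simp)
    qed
    thus ?thesis by simp
  qed
qed

end




theorem theorem2p4:
  fixes c :: "nat \<Rightarrow> complex" and \<epsilon> :: real
  assumes "G0 c"
    and "\<epsilon> > 0"
    and "dseries c ` halfplane 0 \<subseteq> halfplane (1/2 + \<epsilon>)"
  shows "\<exists>C. \<forall>a\<in>H2. \<exists>b\<in>H2.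
           (\<forall>s\<in>halfplane (1/2). dseries b s = deriv (dseries a) (dseries c s)) \<and>
           H2_norm b \<le> C * H2_norm a"
proof -
  interpret Gctx c \<epsilon> using assms by unfold_locales
  define C where "C = sqrt (\<Sum>n. (ln (real (Suc n)))\<^sup>2 * exp (- (1 + 2 * \<epsilon>) * ln (real (Suc n))))"
  show ?thesis
  proof (intro exI ballI)
    fix a assume "a \<in> H2"
    hence ha: "summable (\<lambda>n. (cmod (a (Suc n)))\<^sup>2)" by (simp add: H2_def)
    define lamk where "lamk k = ln (real (Suc k))" for k
    have lam0: "lamk k \<ge> 0" for k by (simp add: lamk_def)
    define v where "v k = gco c (lamk k)" for k
    define r where "r k = exp (- lamk k * (1/2 + \<epsilon>))" for k
    define w where "w k = a (Suc k) * (- of_real (lamk k))" for k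
    have vb: "(\<Sum>n<K. (cmod (v k (Suc n)))\<^sup>2) \<le> (r k)\<^sup>2" for k K
      unfolding v_def r_def by (rule G1'(2)[OF lam0])
    have vs: "summable (\<lambda>n. (cmod (v k (Suc n)))\<^sup>2)" for k
      unfolding v_def by (rule G1'(1)[OF lam0])
    have r0: "r k \<ge> 0" for k by (simp add: r_def)
    define y where "y k = lamk k * exp (- (1/2 + \<epsilon>) * lamk k)" for k
    have ys: "summable (\<lambda>k. (y k)\<^sup>2)"
    proof -
      have "(y k)\<^sup>2 = (ln (real (Suc k)))\<^sup>2 * exp (- (1 + 2 * \<epsilon>) * ln (real (Suc k)))" for k
        unfolding y_def lamk_def by (simp add: power_mult_distrib exp2 algebra_simps)
      thus ?thesis using summable_ln2_exp_ln[of "1 + 2 * \<epsilon>"] assms(2) by simp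
    qed
    have wr: "cmod (w k) * r k = \<bar>cmod (a (Suc k)) * y k\<bar>" for k
      using lam0[of k] by (simp add: w_def r_def y_def norm_mult abs_mult algebra_simps)
    have ws: "summable (\<lambda>k. cmod (w k) * r k)"
      unfolding wr by (rule cs_series(1)[OF ha ys])
    have yC: "sqrt (\<Sum>k. (y k)\<^sup>2) = C"
    proof -
      have "(y k)\<^sup>2 = (ln (real (Suc k)))\<^sup>2 * exp (- (1 + 2 * \<epsilon>) * ln (real (Suc k)))" for k
        unfolding y_def lamk_def by (simp add: power_mult_distrib exp2 algebra_simps)
      thus ?thesis unfolding C_def by simp
    qed
    define S where "S = (\<Sum>k. cmod (w k) * r k)"
    have SC: "S \<le> H2_norm a * C"
      unfolding S_def wr H2_norm_def yC[symmetric] by (rule cs_series(2)[OF ha ys])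
    define b where "b m = (\<Sum>k. w k * v k m)" for m
    note mk = mink[OF vb r0 ws]
    have bH: "b \<in> H2" using mk(2) unfolding H2_def b_def by simp
    have bn: "H2_norm b \<le> C * H2_norm a"
    proof -
      have S0: "S \<ge> 0" unfolding S_def using ws r0 by (intro suminf_nonneg) auto
      have "H2_norm b \<le> sqrt (S\<^sup>2)" unfolding H2_norm_def b_def S_def using mk(3) by (rule real_sqrt_le_mono)
      also have "\<dots> = S" using S0 by simp
      finally show ?thesis using SC by (simp add: mult.commute)
    qed
    have ident: "dseries b s = deriv (dseries a) (dseries c s)" if s: "s \<in> halfplane (1/2)" for s
    proof -
      have Res: "Re s > 1/2" using s by (simp add: halfplane_def)
      have Re0: "Re s > 0" using Res by simp
      have RP: "Re (dseries c s) > 1/2" using RePhi[OF Re0] assms(2) by simp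
      define Y where "Y N = (\<Sum>k<N. w k * dseries (v k) s)" for N
      have dv: "dseries (v k) s = exp (- of_real (lamk k) * dseries c s)" for k
        unfolding v_def by (rule G2[OF lam0 Res])
      have trm: "a (Suc k) * (- of_real (ln (real (Suc k)))) * pw (Suc k) (dseries c s) = w k * dseries (v k) s" for k
        unfolding dv w_def pw_def lamk_def by (simp add: mult_ac)
      have dsum: "summable (\<lambda>k. w k * dseries (v k) s)"
        using dseries_deriv(1)[OF ha RP] unfolding trm .
      have der: "deriv (dseries a) (dseries c s) = (\<Sum>k. w k * dseries (v k) s)"
        using dseries_deriv(2)[OF ha RP] unfolding trm .
      have Ylim: "Y \<longlonglongrightarrow> dseries b s"
      proof -
        define SN where "SN N = (\<Sum>j. cmod (w (j + N)) * r (j + N))" for N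
        have SNlim: "SN \<longlonglongrightarrow> 0"
        proof -
          have "SN N = S - (\<Sum>k<N. cmod (w k) * r k)" for N
            using suminf_split_initial_segment[OF ws, of N] unfolding SN_def S_def by simp
          hence "SN = (\<lambda>N. S - (\<Sum>k<N. cmod (w k) * r k))" by (rule ext)
          moreover have "(\<lambda>N. S - (\<Sum>k<N. cmod (w k) * r k)) \<longlonglongrightarrow> S - S"
            unfolding S_def by (intro tendsto_intros summable_LIMSEQ ws)
          ultimately show ?thesis by simp
        qed
        have bound: "cmod (dseries b s - Y N) \<le> SN N * sqrt (Zt (Re s))" for N
        proof -
          define u where "u m = (\<Sum>j. w (j + N) * v (j + N) m)" for m
          have wsN: "summable (\<lambda>j. cmod (w (j + N)) * r (j + N))"
            using summable_ignore_initial_segment[OF ws, of N] .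
          note mkN = mink[OF vb r0 wsN]
          have us: "summable (\<lambda>n. (cmod (u (Suc n)))\<^sup>2)" using mkN(2) unfolding u_def .
          have un: "(\<Sum>n. (cmod (u (Suc n)))\<^sup>2) \<le> (SN N)\<^sup>2" using mkN(3) unfolding u_def SN_def .
          have SN0: "SN N \<ge> 0" unfolding SN_def using wsN r0 by (intro suminf_nonneg) auto
          have bsplit: "b (Suc n) = u (Suc n) + (\<Sum>k<N. w k * v k (Suc n))" for n
            unfolding b_def u_def using suminf_split_initial_segment[OF mk(1)[of n], of N] by simp
          have su: "summable (\<lambda>n. u (Suc n) * pw (Suc n) s)" by (rule dseries_bound(2)[OF us Res])
          have svk: "summable (\<lambda>n. v k (Suc n) * pw (Suc n) s)" for k by (rule dseries_bound(2)[OF vs Res])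
          have "dseries b s = (\<Sum>n. u (Suc n) * pw (Suc n) s + (\<Sum>k<N. w k * (v k (Suc n) * pw (Suc n) s)))"
            unfolding dseries_pw bsplit by (simp add: distrib_right sum_distrib_right mult.assoc)
          also have "\<dots> = dseries u s + (\<Sum>n. \<Sum>k<N. w k * (v k (Suc n) * pw (Suc n) s))"
            unfolding dseries_pw using su svk by (intro suminf_add[symmetric] summable_sum summable_mult) auto
          also have "(\<Sum>n. \<Sum>k<N. w k * (v k (Suc n) * pw (Suc n) s)) = Y N"
            unfolding Y_def dseries_pw using svk
            by (subst suminf_sum) (auto intro: summable_mult simp: suminf_mult)
          finally have "dseries b s - Y N = dseries u s" by simp
          hence "cmod (dseries b s - Y N) \<le> sqrt (\<Sum>n. (cmod (u (Suc n)))\<^sup>2) * sqrt (Zt (Re s))"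
            using dseries_bound(3)[OF us Res] by simp
          also have "\<dots> \<le> SN N * sqrt (Zt (Re s))"
            using un SN0 summable_Zt[OF Res] unfolding Zt_def
            by (intro mult_right_mono) (auto simp: real_le_lsqrt intro!: suminf_nonneg)
          finally show ?thesis .
        qed
        have "(\<lambda>N. dseries b s - Y N) \<longlonglongrightarrow> 0"
        proof (rule Lim_null_comparison)
          show "\<forall>\<^sub>F N in sequentially. norm (dseries b s - Y N) \<le> SN N * sqrt (Zt (Re s))"
            using bound by simp
          have "(\<lambda>N. SN N * sqrt (Zt (Re s))) \<longlonglongrightarrow> 0 * sqrt (Zt (Re s))"
            by (intro tendsto_intros SNlim)
          thus "(\<lambda>N. SN N * sqrt (Zt (Re s))) \<longlonglongrightarrow> 0" by simp
        qed
        hence "(\<lambda>N. dseries b s - (dseries b s - Y N)) \<longlonglongrightarrow> dseries b s - 0"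
          by (intro tendsto_intros)
        thus ?thesis by simp
      qed
      moreover have "Y \<longlonglongrightarrow> (\<Sum>k. w k * dseries (v k) s)"
        unfolding Y_def by (rule summable_LIMSEQ[OF dsum])
      ultimately have "dseries b s = (\<Sum>k. w k * dseries (v k) s)" by (rule LIMSEQ_unique)
      thus ?thesis using der by simp
    qed
    show "\<exists>b\<in>H2. (\<forall>s\<in>halfplane (1/2). dseries b s = deriv (dseries a) (dseries c s)) \<and> H2_norm b \<le> C * H2_norm a"
      using bH bn ident by blast
  qed
qed


end
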